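(* If a connected graph $G$ of order $n$ satisfies $\mathrm{sn}(G)=n-2$, then $\mathrm{ivs}_\chi(G)=1$.
   Context: All graphs are finite and simple. For a graph $G=(V,E)$ with $k=\chi(G)$, a proper $k$-colouring is a map $c:V\to[k]$ with $c(u)\neq c(v)$ for every edge $uv$. A set $S\subseteq V$ is a determining set for $(G,c)$ if there is no proper $k$-colouring $c'\neq c$ with $c'(s)=c(s)$ for all $s\in S$; a critical set is an inclusion-minimal determining set. $\mathrm{sn}(G)$ is the minimum size of a critical set over all proper $\chi(G)$-colourings $c$ of $G$ (equivalently, the minimum number of vertices coloured in a partial colouring that extends uniquely to a proper $\chi(G)$-colouring). The independent chromatic vertex stability number $\mathrm{ivs}_\chi(G)$ is the size of a smallest independent set $S\subseteq V$ such that $\chi(G\setminus S)<\chi(G)$. *)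

theory Defs
  imports Main
begin

definition simple_graph :: "'a set \<Rightarrow> 'a set set \<Rightarrow> bool" where
  "simple_graph V E \<longleftrightarrow> finite V \<and> (\<forall>e\<in>E. e \<subseteq> V \<and> card e = 2)"

definition adj :: "'a set set \<Rightarrow> 'a \<Rightarrow> 'a \<Rightarrow> bool" where
  "adj E u v \<longleftrightarrow> {u, v} \<in> E"

definition connected_graph :: "'a set \<Rightarrow> 'a set set \<Rightarrow> bool" where
  "connected_graph V E \<longleftrightarrow> V \<noteq> {} \<and> (\<forall>u\<in>V. \<forall>v\<in>V. (adj E)\<^sup>*\<^sup>* u v)"

definition proper_colouring :: "'a set \<Rightarrow> 'a set set \<Rightarrow> nat \<Rightarrow> ('a \<Rightarrow> nat) \<Rightarrow> bool" where
  "proper_colouring V E k c \<longleftrightarrow>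
     (\<forall>v\<in>V. c v \<in> {1..k}) \<and> (\<forall>u\<in>V. \<forall>v\<in>V. {u, v} \<in> E \<longrightarrow> c u \<noteq> c v)"

definition chi :: "'a set \<Rightarrow> 'a set set \<Rightarrow> nat" where
  "chi V E = (LEAST k. \<exists>c. proper_colouring V E k c)"

definition determining_set :: "'a set \<Rightarrow> 'a set set \<Rightarrow> ('a \<Rightarrow> nat) \<Rightarrow> 'a set \<Rightarrow> bool" where
  "determining_set V E c S \<longleftrightarrow> S \<subseteq> V \<and>
     \<not> (\<exists>c'. proper_colouring V E (chi V E) c' \<and> (\<exists>v\<in>V. c' v \<noteq> c v) \<and> (\<forall>s\<in>S. c' s = c s))"

definition critical_set :: "'a set \<Rightarrow> 'a set set \<Rightarrow> ('a \<Rightarrow> nat) \<Rightarrow> 'a set \<Rightarrow> bool" where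
  "critical_set V E c S \<longleftrightarrow> determining_set V E c S \<and>
     (\<forall>T. T \<subset> S \<longrightarrow> \<not> determining_set V E c T)"

definition sn :: "'a set \<Rightarrow> 'a set set \<Rightarrow> nat" where
  "sn V E = Min {card S | S c. proper_colouring V E (chi V E) c \<and> critical_set V E c S}"

definition independent_set :: "'a set \<Rightarrow> 'a set set \<Rightarrow> 'a set \<Rightarrow> bool" where
  "independent_set V E S \<longleftrightarrow> S \<subseteq> V \<and> (\<forall>u\<in>S. \<forall>v\<in>S. {u, v} \<notin> E)"

text \<open>G minus S: the subgraph induced by V - S.\<close>
definition del_edges :: "'a set \<Rightarrow> 'a set set \<Rightarrow> 'a set \<Rightarrow> 'a set set" where
  "del_edges V E S = {e \<in> E. e \<subseteq> V - S}"

definition ivs_chi :: "'a set \<Rightarrow> 'a set set \<Rightarrow> nat" where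
  "ivs_chi V E = Min {card S | S. independent_set V E S \<and> chi (V - S) (del_edges V E S) < chi V E}"

end

theory Submission
  imports Defs
begin

definition sees :: "'a set set \<Rightarrow> nat \<Rightarrow> ('a \<Rightarrow> nat) \<Rightarrow> 'a set \<Rightarrow> 'a \<Rightarrow> bool" where
  "sees E k c A v \<longleftrightarrow> (\<forall>i\<in>{1..k}. i \<noteq> c v \<longrightarrow> (\<exists>w\<in>A. {v,w} \<in> E \<and> c w = i))"

lemma edge_facts:
  assumes "simple_graph V E" "{u,v} \<in> E"
  shows "u \<noteq> v" "u \<in> V" "v \<in> V"
proof -
  have "{u,v} \<subseteq> V" "card {u,v} = 2" using assms unfolding simple_graph_def by auto
  then show "u \<noteq> v" "u \<in> V" "v \<in> V" by (auto split: if_splits)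
qed

lemma pc_ne:
  assumes "proper_colouring V E k c" "u \<in> V" "v \<in> V" "{u,v} \<in> E"
  shows "c u \<noteq> c v"
  using assms unfolding proper_colouring_def by blast

lemma pc_range:
  assumes "proper_colouring V E k c" "v \<in> V"
  shows "c v \<in> {1..k}"
  using assms unfolding proper_colouring_def by blast

lemma force_one:
  assumes pc: "proper_colouring V E k c'" and v: "v \<in> V" and A: "A \<subseteq> V"
    and s: "sees E k c A v" and agree: "\<forall>w\<in>A. c' w = c w"
  shows "c' v = c v"
proof (rule ccontr)
  assume ne: "c' v \<noteq> c v"
  have "c' v \<in> {1..k}" using pc v by (rule pc_range)
  then obtain w where w: "w \<in> A" "{v,w} \<in> E" "c w = c' v" using s ne unfolding sees_def by metis
  then have "c' w = c' v" using agree by auto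
  moreover have "w \<in> V" using w A by auto
  ultimately show False using pc_ne[OF pc v _ w(2)] by auto
qed

lemma triple_determining:
  assumes pc: "proper_colouring V E (chi V E) c"
    and u: "u1 \<in> V" "u2 \<in> V" "u3 \<in> V"
    and s1: "sees E (chi V E) c (V - {u1,u2,u3}) u1"
    and s2: "sees E (chi V E) c (V - {u2,u3}) u2"
    and s3: "sees E (chi V E) c (V - {u3}) u3"
  shows "determining_set V E c (V - {u1,u2,u3})"
  unfolding determining_set_def
proof (intro conjI notI)
  show "V - {u1, u2, u3} \<subseteq> V" by auto
next
  assume "\<exists>c'. proper_colouring V E (chi V E) c' \<and> (\<exists>v\<in>V. c' v \<noteq> c v) \<and> (\<forall>s\<in>V - {u1, u2, u3}. c' s = c s)"
  then obtain c' where c': "proper_colouring V E (chi V E) c'" "\<exists>v\<in>V. c' v \<noteq> c v"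
    "\<forall>s\<in>V - {u1, u2, u3}. c' s = c s" by blast
  have e1: "c' u1 = c u1" by (rule force_one[OF c'(1) u(1) _ s1]) (use c'(3) in blast)+
  have a2: "\<forall>w\<in>V - {u2,u3}. c' w = c w"
  proof
    fix w assume "w \<in> V - {u2,u3}"
    then show "c' w = c w" using c'(3) e1 by (cases "w = u1") auto
  qed
  have e2: "c' u2 = c u2" by (rule force_one[OF c'(1) u(2) _ s2 a2]) blast
  have a3: "\<forall>w\<in>V - {u3}. c' w = c w"
  proof
    fix w assume "w \<in> V - {u3}"
    then show "c' w = c w" using c'(3) e1 e2 by (cases "w = u1"; cases "w = u2") auto
  qed
  have e3: "c' u3 = c u3" by (rule force_one[OF c'(1) u(3) _ s3 a3]) blast
  show False using c'(2,3) e1 e2 e3 by auto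
qed

lemma sn_le:
  assumes sg: "simple_graph V E" and pc: "proper_colouring V E (chi V E) c"
    and d: "determining_set V E c S"
  shows "sn V E \<le> card S"
proof -
  have fV: "finite V" using sg unfolding simple_graph_def by auto
  have SV: "S \<subseteq> V" using d unfolding determining_set_def by auto
  let ?P = "\<lambda>T. T \<subseteq> S \<and> determining_set V E c T"
  have "?P S" using d by auto
  then obtain T where T: "?P T" "\<forall>T'. ?P T' \<longrightarrow> card T \<le> card T'"
    using ex_has_least_nat[of ?P S card] by blast
  have TV: "T \<subseteq> V" using T(1) SV by blast
  have fT: "finite T" using TV fV by (rule finite_subset)
  have crit: "critical_set V E c T"
    unfolding critical_set_def
  proof (intro conjI allI impI notI)
    show "determining_set V E c T" using T(1) by auto
  next
    fix T' assume "T' \<subset> T" "determining_set V E c T'"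
    then have "?P T'" using T(1) by blast
    moreover have "card T' < card T" using \<open>T' \<subset> T\<close> fT psubset_card_mono by blast
    ultimately show False using T(2) by (meson not_le)
  qed
  let ?M = "{card S | S c. proper_colouring V E (chi V E) c \<and> critical_set V E c S}"
  have "card T \<in> ?M" using crit pc by blast
  moreover have "?M \<subseteq> card ` Pow V"
  proof
    fix x assume "x \<in> ?M"
    then obtain S' c0 where "x = card S'" "critical_set V E c0 S'" by blast
    then have "S' \<subseteq> V" unfolding critical_set_def determining_set_def by blast
    then show "x \<in> card ` Pow V" using \<open>x = card S'\<close> by blast
  qed
  then have "finite ?M" using fV by (meson finite_Pow_iff finite_imageI finite_subset)
  ultimately have "sn V E \<le> card T" unfolding sn_def by (simp add: Min_le)
  also have "card T \<le> card S" using T(1) SV fV by (meson card_mono finite_subset)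
  finally show ?thesis .
qed


lemma compress:
  assumes pc: "\<forall>u\<in>V'. \<forall>v\<in>V'. {u,v} \<in> E' \<longrightarrow> d u \<noteq> d v"
    and rng: "\<forall>v\<in>V'. d v \<in> {1..k} \<and> d v \<noteq> j" and j: "j \<in> {1..k}"
  shows "\<exists>e. proper_colouring V' E' (k - 1) e"
proof -
  define e where "e v = (if d v = k then j else d v)" for v
  have "proper_colouring V' E' (k - 1) e"
    unfolding proper_colouring_def
  proof (intro conjI ballI impI)
    fix v assume "v \<in> V'"
    then show "e v \<in> {1..k-1}" using rng j unfolding e_def by auto
  next
    fix u v assume "u \<in> V'" "v \<in> V'" "{u,v} \<in> E'"
    then have "d u \<noteq> d v" "d u \<noteq> j" "d v \<noteq> j" using pc rng by auto
    then show "e u \<noteq> e v" unfolding e_def by auto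
  qed
  then show ?thesis by blast
qed

lemma recolour_drop:
  assumes sg: "simple_graph V E" and pc: "proper_colouring V E k c" and j: "j \<in> {1..k}"
  shows "\<exists>d. proper_colouring (V - {v\<in>V. c v = j \<and> sees E k c V v})
              (del_edges V E {v\<in>V. c v = j \<and> sees E k c V v}) (k - 1) d"
proof -
  let ?B = "{v\<in>V. c v = j \<and> sees E k c V v}"
  define d where "d v = (if c v = j \<and> \<not> sees E k c V v
     then (SOME i. i \<in> {1..k} \<and> i \<noteq> j \<and> (\<forall>w\<in>V. {v,w} \<in> E \<longrightarrow> c w \<noteq> i)) else c v)" for v
  have dprop: "d v \<in> {1..k} \<and> d v \<noteq> j \<and> (\<forall>w\<in>V. {v,w} \<in> E \<longrightarrow> c w \<noteq> d v)"
    if "v \<in> V" "c v = j" "\<not> sees E k c V v" for v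
  proof -
    have "\<exists>i. i \<in> {1..k} \<and> i \<noteq> j \<and> (\<forall>w\<in>V. {v,w} \<in> E \<longrightarrow> c w \<noteq> i)"
      using that unfolding sees_def by blast
    then have "(SOME i. i \<in> {1..k} \<and> i \<noteq> j \<and> (\<forall>w\<in>V. {v,w} \<in> E \<longrightarrow> c w \<noteq> i)) \<in> {1..k} \<and>
       (SOME i. i \<in> {1..k} \<and> i \<noteq> j \<and> (\<forall>w\<in>V. {v,w} \<in> E \<longrightarrow> c w \<noteq> i)) \<noteq> j \<and>
       (\<forall>w\<in>V. {v,w} \<in> E \<longrightarrow> c w \<noteq> (SOME i. i \<in> {1..k} \<and> i \<noteq> j \<and> (\<forall>w\<in>V. {v,w} \<in> E \<longrightarrow> c w \<noteq> i)))"
      by (rule someI_ex)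
    then show ?thesis unfolding d_def using that by simp
  qed
  have rng: "\<forall>v\<in>V - ?B. d v \<in> {1..k} \<and> d v \<noteq> j"
  proof
    fix v assume v: "v \<in> V - ?B"
    show "d v \<in> {1..k} \<and> d v \<noteq> j"
    proof (cases "c v = j")
      case True
      then have "\<not> sees E k c V v" using v by auto
      then show ?thesis using dprop[of v] v True by auto
    next
      case False
      then show ?thesis using pc_range[OF pc] v unfolding d_def by auto
    qed
  qed
  have prp: "\<forall>u\<in>V - ?B. \<forall>v\<in>V - ?B. {u,v} \<in> del_edges V E ?B \<longrightarrow> d u \<noteq> d v"
  proof (intro ballI impI)
    fix u v assume u: "u \<in> V - ?B" and v: "v \<in> V - ?B" and e: "{u,v} \<in> del_edges V E ?B"
    have E: "{u,v} \<in> E" using e unfolding del_edges_def by auto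
    have uv: "{v,u} \<in> E" using E by (simp add: insert_commute)
    have cne: "c u \<noteq> c v" using pc_ne[OF pc _ _ E] u v by auto
    show "d u \<noteq> d v"
    proof (cases "c u = j \<and> \<not> sees E k c V u")
      case cu: True
      then have "c v \<noteq> j" using cne by auto
      then have "d v = c v" unfolding d_def by auto
      moreover have "c v \<noteq> d u" using dprop[of u] cu u v E by auto
      ultimately show ?thesis by auto
    next
      case cu: False
      then have du: "d u = c u" unfolding d_def by auto
      show ?thesis
      proof (cases "c v = j \<and> \<not> sees E k c V v")
        case cv: True
        have "c u \<noteq> d v" using dprop[of v] cv u v uv by auto
        then show ?thesis using du by auto
      next
        case False
        then have "d v = c v" unfolding d_def by auto
        then show ?thesis using du cne by auto
      qed
    qed
  qed
  show ?thesis using compress[OF prp rng j] .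
qed

lemma chi_le:
  assumes "proper_colouring V E k c"
  shows "chi V E \<le> k"
  unfolding chi_def using assms by (metis Least_le)

lemma del_empty:
  assumes sg: "simple_graph V E"
  shows "del_edges V E {} = E"
  using sg unfolding del_edges_def simple_graph_def by auto

lemma two_bvertices:
  assumes sg: "simple_graph V E" and pc: "proper_colouring V E (chi V E) c"
    and j: "j \<in> {1..chi V E}"
    and nocrit: "\<forall>v\<in>V. \<not> chi (V - {v}) (del_edges V E {v}) < chi V E"
  shows "\<exists>a a'. a \<noteq> a' \<and> a \<in> V \<and> a' \<in> V \<and> c a = j \<and> c a' = j \<and>
     sees E (chi V E) c V a \<and> sees E (chi V E) c V a'"
proof (rule ccontr)
  let ?k = "chi V E"
  let ?B = "{v\<in>V. c v = j \<and> sees E ?k c V v}"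
  assume no: "\<not> ?thesis"
  have B: "?B = {} \<or> (\<exists>b. ?B = {b})"
  proof (cases "?B = {}")
    case False
    then obtain b where b: "b \<in> ?B" by blast
    have "?B = {b}"
    proof
      show "?B \<subseteq> {b}"
      proof
        fix x assume "x \<in> ?B"
        then show "x \<in> {b}" using no b by blast
      qed
    qed (use b in blast)
    then show ?thesis by blast
  qed simp
  obtain d where d: "proper_colouring (V - ?B) (del_edges V E ?B) (?k - 1) d"
    using recolour_drop[OF sg pc j] by blast
  have lt: "chi (V - ?B) (del_edges V E ?B) < ?k"
    using chi_le[OF d] j by auto
  from B show False
  proof
    assume e: "?B = {}"
    have "chi V E < chi V E" using lt unfolding e Diff_empty del_empty[OF sg] .
    then show False by simp
  next
    assume "\<exists>b. ?B = {b}"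
    then obtain b where b: "?B = {b}" by blast
    then have "b \<in> V" by blast
    then show False using nocrit lt b by auto
  qed
qed


lemma sees_diff:
  assumes "sees E k c V v" "\<And>w. {v,w} \<in> E \<Longrightarrow> w \<notin> X"
  shows "sees E k c (V - X) v"
  using assms unfolding sees_def by blast

lemma sees_diff2:
  assumes s: "sees E k c V v" and x: "\<And>w. {v,w} \<in> E \<Longrightarrow> w \<in> X \<Longrightarrow> w = b"
    and o: "\<exists>w\<in>V - X. {v,w} \<in> E \<and> c w = c b"
  shows "sees E k c (V - X) v"
  unfolding sees_def
proof (intro ballI impI)
  fix i assume i: "i \<in> {1..k}" "i \<noteq> c v"
  show "\<exists>w\<in>V - X. {v, w} \<in> E \<and> c w = i"
  proof (cases "i = c b")
    case True
    then show ?thesis using o by auto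
  next
    case False
    obtain w where w: "w \<in> V" "{v,w} \<in> E" "c w = i" using s i unfolding sees_def by blast
    have "w \<notin> X"
    proof
      assume "w \<in> X"
      then have "w = b" using x w(2) by blast
      then show False using False w(3) by simp
    qed
    then show ?thesis using w by blast
  qed
qed

lemma main_comb:
  fixes V :: "'a set" and E :: "'a set set" and k :: nat and c :: "'a \<Rightarrow> nat"
  assumes sg: "simple_graph V E" and conn: "connected_graph V E" and pc: "proper_colouring V E k c"
    and L2: "\<And>j. j \<in> {1..k} \<Longrightarrow> \<exists>a a'. a \<noteq> a' \<and> a \<in> V \<and> a' \<in> V \<and> c a = j \<and> c a' = j \<and>
               sees E k c V a \<and> sees E k c V a'"
    and nf: "\<And>u1 u2 u3. u1 \<in> V \<Longrightarrow> u2 \<in> V \<Longrightarrow> u3 \<in> V \<Longrightarrow> u1 \<noteq> u2 \<Longrightarrow> u1 \<noteq> u3 \<Longrightarrow> u2 \<noteq> u3 \<Longrightarrow>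
          sees E k c (V - {u1,u2,u3}) u1 \<Longrightarrow> sees E k c (V - {u2,u3}) u2 \<Longrightarrow>
          sees E k c (V - {u3}) u3 \<Longrightarrow> False"
  shows False
proof -
  define bv where "bv v \<longleftrightarrow> v \<in> V \<and> sees E k c V v" for v
  define uniq where "uniq a b \<longleftrightarrow> (\<forall>w\<in>V. {a,w} \<in> E \<and> c w = c b \<longrightarrow> w = b)" for a b
  have sym: "{v,u} \<in> E" if "{u,v} \<in> E" for u v using that by (simp add: insert_commute)
  have ef: "u \<noteq> v \<and> u \<in> V \<and> v \<in> V" if "{u,v} \<in> E" for u v using edge_facts[OF sg that] by blast
  have ne: "c u \<noteq> c v" if "{u,v} \<in> E" for u v using pc_ne[OF pc _ _ that] ef[OF that] by blast
  have rng: "c v \<in> {1..k}" if "v \<in> V" for v using pc_range[OF pc that] .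
  have prov: "\<exists>w\<in>V. {a,w} \<in> E \<and> c w = i" if "bv a" "i \<in> {1..k}" "i \<noteq> c a" for a i
    using that unfolding sees_def bv_def by blast
  have partner: "\<exists>a'. a' \<noteq> v \<and> bv a' \<and> c a' = c v" if vV: "v \<in> V" for v
  proof -
    obtain a a' where aa: "a \<noteq> a'" "a \<in> V" "a' \<in> V" "c a = c v" "c a' = c v"
      "sees E k c V a" "sees E k c V a'" using L2[OF rng[OF vV]] by blast
    show ?thesis
    proof (cases "a = v")
      case True
      then show ?thesis using aa unfolding bv_def by metis
    next
      case False
      then show ?thesis using aa unfolding bv_def by metis
    qed
  qed
  have S1: False if b: "bv u1" "bv u2" "bv u3" and d: "u1 \<noteq> u2" "u1 \<noteq> u3" "u2 \<noteq> u3"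
    and n: "{u1,u2} \<notin> E" "{u1,u3} \<notin> E" "{u2,u3} \<notin> E" for u1 u2 u3
  proof -
    have "sees E k c (V - {u1,u2,u3}) u1"
    proof (rule sees_diff)
      show "sees E k c V u1" using b unfolding bv_def by blast
      fix w assume "{u1,w} \<in> E" then show "w \<notin> {u1,u2,u3}" using n ef by blast
    qed
    moreover have "sees E k c (V - {u2,u3}) u2"
    proof (rule sees_diff)
      show "sees E k c V u2" using b unfolding bv_def by blast
      fix w assume "{u2,w} \<in> E" then show "w \<notin> {u2,u3}" using n ef by blast
    qed
    moreover have "sees E k c (V - {u3}) u3"
    proof (rule sees_diff)
      show "sees E k c V u3" using b unfolding bv_def by blast
      fix w assume "{u3,w} \<in> E" then show "w \<notin> {u3}" using n ef by blast
    qed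
    ultimately show False using nf b d unfolding bv_def by blast
  qed
  have S2: False if b: "bv a" "bv a'" "bv b" and d: "a \<noteq> a'" "c a' = c a" "c b \<noteq> c a"
    and u: "\<not> uniq a b" "\<not> uniq a' b" for a a' b
  proof -
    have s3: "sees E k c (V - {b}) b"
    proof (rule sees_diff)
      show "sees E k c V b" using b unfolding bv_def by blast
      fix w assume "{b,w} \<in> E" then show "w \<notin> {b}" using ef by blast
    qed
    have s2: "sees E k c (V - {a,b}) a"
    proof (rule sees_diff2)
      show "sees E k c V a" using b unfolding bv_def by blast
      fix w assume "{a,w} \<in> E" "w \<in> {a,b}" then show "w = b" using ef by blast
    next
      obtain w where "w \<in> V" "{a,w} \<in> E" "c w = c b" "w \<noteq> b" using u unfolding uniq_def by blast
      then show "\<exists>w\<in>V - {a,b}. {a,w} \<in> E \<and> c w = c b" using ef by blast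
    qed
    have s1: "sees E k c (V - {a',a,b}) a'"
    proof (rule sees_diff2)
      show "sees E k c V a'" using b unfolding bv_def by blast
      fix w assume "{a',w} \<in> E" "w \<in> {a',a,b}" then show "w = b" using ef ne d by fastforce
    next
      obtain w where "w \<in> V" "{a',w} \<in> E" "c w = c b" "w \<noteq> b" using u unfolding uniq_def by blast
      then show "\<exists>w\<in>V - {a',a,b}. {a',w} \<in> E \<and> c w = c b" using ef d by fastforce
    qed
    have "a' \<noteq> b" "a \<noteq> b" using d by auto
    then show False using nf[OF _ _ _ _ _ _ s1 s2 s3] b d unfolding bv_def by blast
  qed
  have S3': "\<exists>b. bv b \<and> c b = c t \<and> uniq a b" if a: "bv a" and t: "{a,t} \<in> E" for a t
  proof -
    have aV: "a \<in> V" using a unfolding bv_def by blast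
    obtain a' where a': "a' \<noteq> a" "bv a'" "c a' = c a" using partner[OF aV] by blast
    have tV: "t \<in> V" using ef[OF t] by blast
    obtain b1 b2 where bb: "b1 \<noteq> b2" "b1 \<in> V" "b2 \<in> V" "c b1 = c t" "c b2 = c t"
      "sees E k c V b1" "sees E k c V b2" using L2[OF rng[OF tV]] by blast
    have bv1: "bv b1" "bv b2" using bb unfolding bv_def by blast+
    have cta: "c t \<noteq> c a" using ne[OF t] by simp
    have h1: "uniq a b1 \<or> uniq a' b1" using S2[OF a a'(2) bv1(1)] a' bb cta by metis
    have h2: "uniq a b2 \<or> uniq a' b2" using S2[OF a a'(2) bv1(2)] a' bb cta by metis
    show ?thesis
    proof (cases "uniq a b1 \<or> uniq a b2")
      case True
      then show ?thesis using bv1 bb by metis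
    next
      case False
      then have "uniq a' b1" "uniq a' b2" using h1 h2 by auto
      moreover obtain w where "w \<in> V" "{a',w} \<in> E" "c w = c t"
        using prov[OF a'(2) rng[OF tV]] a'(3) cta by metis
      ultimately have "w = b1" "w = b2" using bb unfolding uniq_def by auto
      then show ?thesis using bb by simp
    qed
  qed
  have S3: "bv t" if a: "bv a" and t: "{a,t} \<in> E" for a t
  proof -
    obtain b where b: "bv b" "c b = c t" "uniq a b" using S3'[OF a t] by blast
    have "t = b" using b(2,3) t ef[OF t] unfolding uniq_def by metis
    then show ?thesis using b by simp
  qed
  obtain v0 where v0: "v0 \<in> V" using conn unfolding connected_graph_def by blast
  have k1: "1 \<in> {1..k}" using rng[OF v0] by auto
  obtain a0 where a0: "bv a0" using L2[OF k1] unfolding bv_def by blast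
  have a0V: "a0 \<in> V" using a0 unfolding bv_def by blast
  have reach: "(adj E)\<^sup>*\<^sup>* a0 v" if "v \<in> V" for v
    using conn a0V that unfolding connected_graph_def by blast
  have allbv: "bv v" if "v \<in> V" for v
  proof -
    have "(adj E)\<^sup>*\<^sup>* a0 v" using reach[OF that] .
    then show ?thesis
    proof (induction rule: rtranclp_induct)
      case base
      then show ?case using a0 .
    next
      case (step y z)
      then show ?case using S3 unfolding adj_def by blast
    qed
  qed
  have uniqnbr: "t1 = t2" if h: "{v,t1} \<in> E" "{v,t2} \<in> E" "c t1 = c t2" for v t1 t2
  proof -
    have "bv v" using allbv ef h(1) by blast
    then obtain b where b: "bv b" "c b = c t1" "uniq v b" using S3' h(1) by blast
    have "t1 = b" "t2 = b" using b h ef unfolding uniq_def by metis+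
    then show ?thesis by simp
  qed
  obtain a' where a': "a' \<noteq> a0" "bv a'" "c a' = c a0" using partner[OF a0V] by blast
  have a'V: "a' \<in> V" using a' unfolding bv_def by blast
  define N0 where "N0 = insert a0 {w. {a0,w} \<in> E}"
  have clique: "{b,w} \<in> E" if bw: "{a0,b} \<in> E" "{a0,w} \<in> E" "b \<noteq> w" for b w
  proof (rule ccontr)
    assume nbw: "{b,w} \<notin> E"
    have bvs: "bv b" "bv w" using allbv ef bw by blast+
    have "c b \<noteq> c a'" "c w \<noteq> c a'" using ne[OF bw(1)] ne[OF bw(2)] a'(3) by auto
    then have d: "b \<noteq> a'" "w \<noteq> a'" by auto
    have nba: "{b,a'} \<notin> E"
    proof
      assume "{b,a'} \<in> E"
      then have "a0 = a'" using uniqnbr[of b a0 a'] sym[OF bw(1)] a'(3) by simp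
      then show False using a'(1) by simp
    qed
    have nwa: "{w,a'} \<notin> E"
    proof
      assume "{w,a'} \<in> E"
      then have "a0 = a'" using uniqnbr[of w a0 a'] sym[OF bw(2)] a'(3) by simp
      then show False using a'(1) by simp
    qed
    show False using S1[OF bvs a'(2) bw(3) d nbw nba nwa] .
  qed
  have closed: "z \<in> N0" if y: "y \<in> N0" and yz: "{y,z} \<in> E" for y z
  proof (cases "y = a0")
    case True
    then show ?thesis using yz unfolding N0_def by simp
  next
    case False
    then have ya: "{a0,y} \<in> E" using y unfolding N0_def by simp
    show ?thesis
    proof (cases "c z = c a0")
      case True
      then have "z = a0" using uniqnbr[of y z a0] yz sym[OF ya] by simp
      then show ?thesis unfolding N0_def by simp
    next
      case False
      have zV: "z \<in> V" using ef yz by blast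
      obtain w where w: "w \<in> V" "{a0,w} \<in> E" "c w = c z"
        using prov[OF a0 rng[OF zV]] False by metis
      have "w \<noteq> y" using ne[OF yz] w(3) by auto
      then have "{y,w} \<in> E" using clique[OF ya w(2)] by simp
      then have "z = w" using uniqnbr[of y z w] yz w(3) by simp
      then show ?thesis using w unfolding N0_def by simp
    qed
  qed
  have "a' \<in> N0"
  proof -
    have "(adj E)\<^sup>*\<^sup>* a0 a'" using reach[OF a'V] .
    then show ?thesis
    proof (induction rule: rtranclp_induct)
      case base
      then show ?case unfolding N0_def by simp
    next
      case (step y z)
      then show ?case using closed unfolding adj_def by blast
    qed
  qed
  moreover have "{a0,a'} \<notin> E" using ne[of a0 a'] a'(3) by auto
  ultimately show False using a'(1) unfolding N0_def by auto
qed


lemma exists_colouring: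
  assumes sg: "simple_graph V E"
  shows "\<exists>c. proper_colouring V E (chi V E) c"
proof -
  have fV: "finite V" using sg unfolding simple_graph_def by auto
  obtain h where h: "bij_betw h V {0..<card V}" using ex_bij_betw_finite_nat[OF fV] by blast
  define c0 where "c0 v = h v + 1" for v
  have "proper_colouring V E (card V) c0"
    unfolding proper_colouring_def
  proof (intro conjI ballI impI)
    fix v assume "v \<in> V"
    then have "h v < card V" using h unfolding bij_betw_def by auto
    then show "c0 v \<in> {1..card V}" unfolding c0_def by auto
  next
    fix u v assume uv: "u \<in> V" "v \<in> V" "{u,v} \<in> E"
    have "u \<noteq> v" using edge_facts[OF sg uv(3)] by blast
    then have "h u \<noteq> h v" using h uv unfolding bij_betw_def inj_on_def by blast
    then show "c0 u \<noteq> c0 v" unfolding c0_def by simp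
  qed
  then have "\<exists>k c. proper_colouring V E k c" by blast
  then show ?thesis unfolding chi_def by (rule LeastI_ex)
qed

lemma ivs_one:
  assumes sg: "simple_graph V E" and v: "v \<in> V"
    and lt: "chi (V - {v}) (del_edges V E {v}) < chi V E"
  shows "ivs_chi V E = 1"
proof -
  have fV: "finite V" using sg unfolding simple_graph_def by auto
  let ?M = "{card S | S. independent_set V E S \<and> chi (V - S) (del_edges V E S) < chi V E}"
  have ind: "independent_set V E {v}"
    unfolding independent_set_def using v edge_facts[OF sg] by blast
  have "1 \<in> ?M" using ind lt by force
  moreover have "?M \<subseteq> card ` Pow V" unfolding independent_set_def by blast
  then have "finite ?M" using fV by (meson finite_Pow_iff finite_imageI finite_subset)
  moreover have "1 \<le> y" if yM: "y \<in> ?M" for y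
  proof (rule ccontr)
    assume "\<not> 1 \<le> y"
    then have y0: "y = 0" by simp
    obtain S where S: "y = card S" "independent_set V E S" "chi (V - S) (del_edges V E S) < chi V E"
      using yM by blast
    have "S \<subseteq> V" using S(2) unfolding independent_set_def by blast
    then have "finite S" using fV finite_subset by blast
    then have "S = {}" using S(1) y0 by simp
    then have "chi V E < chi V E" using S(3) del_empty[OF sg] by simp
    then show False by simp
  qed
  ultimately show ?thesis unfolding ivs_chi_def by (intro Min_eqI) auto
qed

theorem lemma1:
  fixes V :: "'a set" and E :: "'a set set" and n :: nat
  assumes "simple_graph V E"
    and "connected_graph V E"
    and "card V = n"
    and "int (sn V E) = int n - 2"
  shows "ivs_chi V E = 1"
proof -
  note sg = assms(1) and conn = assms(2)
  obtain c where pc: "proper_colouring V E (chi V E) c" using exists_colouring[OF sg] by blast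
  show ?thesis
  proof (cases "\<exists>v\<in>V. chi (V - {v}) (del_edges V E {v}) < chi V E")
    case True
    then obtain v where "v \<in> V" "chi (V - {v}) (del_edges V E {v}) < chi V E" by blast
    then show ?thesis using ivs_one[OF sg] by blast
  next
    case False
    then have nocrit: "\<forall>v\<in>V. \<not> chi (V - {v}) (del_edges V E {v}) < chi V E" by blast
    have fV: "finite V" using sg unfolding simple_graph_def by auto
    have L2: "\<exists>a a'. a \<noteq> a' \<and> a \<in> V \<and> a' \<in> V \<and> c a = j \<and> c a' = j \<and>
               sees E (chi V E) c V a \<and> sees E (chi V E) c V a'" if "j \<in> {1..chi V E}" for j
      using two_bvertices[OF sg pc that nocrit] .
    have nf: False if u: "u1 \<in> V" "u2 \<in> V" "u3 \<in> V" "u1 \<noteq> u2" "u1 \<noteq> u3" "u2 \<noteq> u3"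
      and s: "sees E (chi V E) c (V - {u1,u2,u3}) u1" "sees E (chi V E) c (V - {u2,u3}) u2"
          "sees E (chi V E) c (V - {u3}) u3" for u1 u2 u3
    proof -
      have "determining_set V E c (V - {u1,u2,u3})"
        using triple_determining[OF pc u(1-3) s] .
      then have le: "sn V E \<le> card (V - {u1,u2,u3})" using sn_le[OF sg pc] by blast
      have sub: "{u1,u2,u3} \<subseteq> V" using u by blast
      have c3: "card {u1,u2,u3} = 3" using u by simp
      have "card (V - {u1,u2,u3}) = card V - 3"
        using card_Diff_subset[OF finite_subset[OF sub fV] sub] c3 by simp
      moreover have "card V \<ge> 3" using card_mono[OF fV sub] c3 by simp
      ultimately show False using le assms(3,4) by linarith
    qed
    have False
      apply (rule main_comb[OF sg conn pc])
       apply (rule L2, assumption)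
      apply (rule nf; assumption)
      done
    then show ?thesis ..
  qed
qed

end
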